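(* Fix $n\ge 2$ and a dictator agent $t\in\{1,\dots,n\}$. Let $f$ be the mechanism that on a profile $\mathbf{x}=(x_1,\dots,x_n)$ sets $l_1=x_t$, $d_A=\max_{j:\,x_j\le x_t}(x_t-x_j)$, $d_B=\max_{j:\,x_j\ge x_t}(x_j-x_t)$, and $l_2=l_1+\max\{2d_A,d_B\}$ if $d_A\le d_B$, and $l_2=l_1-\max\{d_A,2d_B\}$ otherwise; it outputs $\{l_1,l_2\}$. Then for every profile $\mathbf{x}\in\mathbb{R}^n$, $SC(f,\mathbf{x})\le(n-1)\,OPT(\mathbf{x})$.
   Context: Two-facility game on a line: agent $j$ has location $x_j\in\mathbb{R}$. For facility locations $\{l_1,l_2\}$, an agent at $y$ has cost $\min\{|l_1-y|,|l_2-y|\}$. $SC(f,\mathbf{x})$ is the sum over all agents of their costs under $f(\mathbf{x})$, and $OPT(\mathbf{x})=\min_{l_1,l_2\in\mathbb{R}}\sum_j\min\{|l_1-x_j|,|l_2-x_j|\}$. *)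

theory Defs
  imports Complex_Main
begin

text \<open>Agents are indexed by 1..n; a profile is x :: nat => real (only x 1, ..., x n matter).
  A facility outcome {l1,l2} is represented by the pair (l1,l2).\<close>

definition agent_cost :: "real \<times> real \<Rightarrow> real \<Rightarrow> real" where
  "agent_cost L y = min \<bar>fst L - y\<bar> \<bar>snd L - y\<bar>"

definition SC :: "nat \<Rightarrow> (nat \<Rightarrow> real) \<Rightarrow> real \<times> real \<Rightarrow> real" where
  "SC n x L = (\<Sum>j\<in>{1..n}. agent_cost L (x j))"

definition OPT :: "nat \<Rightarrow> (nat \<Rightarrow> real) \<Rightarrow> real" where
  "OPT n x = (INF L\<in>(UNIV :: (real \<times> real) set). SC n x L)"

definition dA :: "nat \<Rightarrow> nat \<Rightarrow> (nat \<Rightarrow> real) \<Rightarrow> real" where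
  "dA n t x = Max {x t - x j | j. j \<in> {1..n} \<and> x j \<le> x t}"

definition dB :: "nat \<Rightarrow> nat \<Rightarrow> (nat \<Rightarrow> real) \<Rightarrow> real" where
  "dB n t x = Max {x j - x t | j. j \<in> {1..n} \<and> x j \<ge> x t}"

definition mech :: "nat \<Rightarrow> nat \<Rightarrow> (nat \<Rightarrow> real) \<Rightarrow> real \<times> real" where
  "mech n t x =
     (let l1 = x t; a = dA n t x; b = dB n t x
      in (l1, if a \<le> b then l1 + max (2 * a) b else l1 - max a (2 * b)))"

end

theory Submission
  imports Defs
begin

lemma three_pt:
  fixes p q r l1 l2 :: real
  assumes "p \<le> q" "q \<le> r"
  shows "min (q - p) (r - q) \<le> min \<bar>l1 - p\<bar> \<bar>l2 - p\<bar> + min \<bar>l1 - q\<bar> \<bar>l2 - q\<bar> + min \<bar>l1 - r\<bar> \<bar>l2 - r\<bar>"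
  using assms by (simp add: min_def abs_if split: if_splits) linarith?

lemma cost_nonneg: "agent_cost L y \<ge> 0"
  by (simp add: agent_cost_def)

lemma SC_nonneg: "SC n x L \<ge> 0"
  unfolding SC_def by (rule sum_nonneg) (simp add: cost_nonneg)

lemma OPT_nonneg: "OPT n x \<ge> 0"
  unfolding OPT_def by (rule cINF_greatest) (auto simp: SC_nonneg)

lemma OPT_triple:
  assumes "i \<in> {1..n}" "j \<in> {1..n}" "k \<in> {1..n}" "i \<noteq> j" "j \<noteq> k" "i \<noteq> k"
    "x i \<le> x j" "x j \<le> x k"
  shows "min (x j - x i) (x k - x j) \<le> OPT n x"
  unfolding OPT_def
proof (rule cINF_greatest)
  fix L :: "real \<times> real"
  have "min (x j - x i) (x k - x j) \<le> agent_cost L (x i) + agent_cost L (x j) + agent_cost L (x k)"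
    unfolding agent_cost_def using three_pt[OF assms(7,8)] by simp
  also have "\<dots> = (\<Sum>m\<in>{i,j,k}. agent_cost L (x m))"
    using assms by simp
  also have "\<dots> \<le> SC n x L"
    unfolding SC_def using assms by (intro sum_mono2) (auto simp: cost_nonneg)
  finally show "min (x j - x i) (x k - x j) \<le> SC n x L" .
qed simp

lemma core:
  fixes x :: "nat \<Rightarrow> real" and I :: "nat set" and Ob a b :: real
  assumes O0: "Ob \<ge> 0"
    and tri: "\<And>i j k. i \<in> I \<Longrightarrow> j \<in> I \<Longrightarrow> k \<in> I \<Longrightarrow> i \<noteq> j \<Longrightarrow> j \<noteq> k \<Longrightarrow> i \<noteq> k
       \<Longrightarrow> x i \<le> x j \<Longrightarrow> x j \<le> x k \<Longrightarrow> min (x j - x i) (x k - x j) \<le> Ob"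
    and t: "t \<in> I" and jL: "jL \<in> I" "x jL = x t - a" and jR: "jR \<in> I" "x jR = x t + b"
    and bnd: "\<forall>m\<in>I. x t - a \<le> x m \<and> x m \<le> x t + b"
    and a0: "a \<ge> 0" and ab: "a \<le> b" and j: "j \<in> I"
  shows "min \<bar>x t - x j\<bar> \<bar>x t + max (2 * a) b - x j\<bar> \<le> Ob"
proof -
  have aO: "a \<le> Ob"
  proof (cases "a = 0")
    case True then show ?thesis using O0 by simp
  next
    case False
    then have "a > 0" using a0 by simp
    then have "jL \<noteq> t" "jR \<noteq> t" "jL \<noteq> jR" using jL jR ab by auto
    from tri[OF jL(1) t jR(1) this(1) this(2)[symmetric] this(3)] jL jR \<open>a > 0\<close> ab
    show ?thesis by simp
  qed
  have bj: "x t - a \<le> x j" "x j \<le> x t + b" using bnd j by auto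
  show ?thesis
  proof (cases "x j \<le> x t")
    case True
    then show ?thesis using aO bj by simp
  next
    case False
    show ?thesis
    proof (cases "2 * a \<le> b")
      case True
      show ?thesis
      proof (cases "x j = x t + b")
        case True then show ?thesis using O0 \<open>2 * a \<le> b\<close> by simp
      next
        case False
        then have "j \<noteq> jR" "j \<noteq> t" using jR \<open>\<not> x j \<le> x t\<close> by auto
        have "t \<noteq> jR" using jR bj \<open>\<not> x j \<le> x t\<close> by auto
        from tri[OF t j jR(1) \<open>j \<noteq> t\<close>[symmetric] \<open>j \<noteq> jR\<close> \<open>t \<noteq> jR\<close>] jR bj \<open>\<not> x j \<le> x t\<close> \<open>2 * a \<le> b\<close>
        show ?thesis by (auto simp: max_def)
      qed
    next
      case False
      show ?thesis
      proof (cases "x j \<le> x t + a")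
        case True
        have "a > 0" using \<open>\<not> x j \<le> x t\<close> True by simp
        then have "jL \<noteq> t" "j \<noteq> t" "jL \<noteq> j" using jL \<open>\<not> x j \<le> x t\<close> by auto
        from tri[OF jL(1) t j this(1) this(2)[symmetric] this(3)] jL True \<open>\<not> x j \<le> x t\<close> False
        show ?thesis by (auto simp: max_def min_def split: if_splits)
      next
        case False2: False
        then show ?thesis using aO False bj by (auto simp: max_def min_def)
      qed
    qed
  qed
qed

lemma dA_facts:
  assumes "t \<in> {1..n}"
  shows "\<exists>jL\<in>{1..n}. x jL = x t - dA n t x" "\<forall>m\<in>{1..n}. x m \<le> x t \<longrightarrow> x t - x m \<le> dA n t x"
    "dA n t x \<ge> 0"
proof -
  let ?S = "{x t - x j | j. j \<in> {1..n} \<and> x j \<le> x t}"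
  have fin: "finite ?S" by simp
  have ne: "x t - x t \<in> ?S" using assms by blast
  then have "?S \<noteq> {}" by blast
  from Max_in[OF fin this] show "\<exists>jL\<in>{1..n}. x jL = x t - dA n t x" unfolding dA_def by force
  show "\<forall>m\<in>{1..n}. x m \<le> x t \<longrightarrow> x t - x m \<le> dA n t x"
  proof (intro ballI impI)
    fix m assume "m \<in> {1..n}" "x m \<le> x t"
    then have "x t - x m \<in> ?S" by blast
    from Max_ge[OF fin this] show "x t - x m \<le> dA n t x" unfolding dA_def .
  qed
  show "dA n t x \<ge> 0" unfolding dA_def using Max_ge[OF fin ne] by simp
qed

lemma dB_facts:
  assumes "t \<in> {1..n}"
  shows "\<exists>jR\<in>{1..n}. x jR = x t + dB n t x" "\<forall>m\<in>{1..n}. x m \<ge> x t \<longrightarrow> x m - x t \<le> dB n t x"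
    "dB n t x \<ge> 0"
proof -
  let ?S = "{x j - x t | j. j \<in> {1..n} \<and> x j \<ge> x t}"
  have fin: "finite ?S" by simp
  have ne: "x t - x t \<in> ?S" using assms by blast
  then have "?S \<noteq> {}" by blast
  from Max_in[OF fin this] show "\<exists>jR\<in>{1..n}. x jR = x t + dB n t x" unfolding dB_def by force
  show "\<forall>m\<in>{1..n}. x m \<ge> x t \<longrightarrow> x m - x t \<le> dB n t x"
  proof (intro ballI impI)
    fix m assume "m \<in> {1..n}" "x m \<ge> x t"
    then have "x m - x t \<in> ?S" by blast
    from Max_ge[OF fin this] show "x m - x t \<le> dB n t x" unfolding dB_def .
  qed
  show "dB n t x \<ge> 0" unfolding dB_def using Max_ge[OF fin ne] by simp
qed

lemma each_cost:
  assumes t: "t \<in> {1..n}" and j: "j \<in> {1..n}"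
  shows "agent_cost (mech n t x) (x j) \<le> OPT n x"
proof -
  define a where "a = dA n t x"
  define b where "b = dB n t x"
  obtain jL where jL: "jL \<in> {1..n}" "x jL = x t - a" using dA_facts[OF t] a_def by blast
  obtain jR where jR: "jR \<in> {1..n}" "x jR = x t + b" using dB_facts[OF t] b_def by blast
  have a0: "a \<ge> 0" and b0: "b \<ge> 0" using dA_facts[OF t] dB_facts[OF t] a_def b_def by auto
  have bnd: "\<forall>m\<in>{1..n}. x t - a \<le> x m \<and> x m \<le> x t + b"
  proof
    fix m assume m: "m \<in> {1..n}"
    show "x t - a \<le> x m \<and> x m \<le> x t + b"
    proof (cases "x m \<le> x t")
      case True
      then have "x t - x m \<le> a" using dA_facts(2)[OF t, of x] m a_def by blast
      then show ?thesis using True b0 by simp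
    next
      case False
      then have "x m - x t \<le> b" using dB_facts(2)[OF t, of x] m b_def by simp
      then show ?thesis using False a0 by simp
    qed
  qed
  have tri: "\<And>i j k. i \<in> {1..n} \<Longrightarrow> j \<in> {1..n} \<Longrightarrow> k \<in> {1..n} \<Longrightarrow> i \<noteq> j \<Longrightarrow> j \<noteq> k \<Longrightarrow> i \<noteq> k
       \<Longrightarrow> x i \<le> x j \<Longrightarrow> x j \<le> x k \<Longrightarrow> min (x j - x i) (x k - x j) \<le> OPT n x"
    by (rule OPT_triple)
  show ?thesis
  proof (cases "a \<le> b")
    case True
    have "min \<bar>x t - x j\<bar> \<bar>x t + max (2 * a) b - x j\<bar> \<le> OPT n x"
      by (rule core[OF OPT_nonneg tri t jL jR bnd a0 True j]) auto
    then show ?thesis using True unfolding agent_cost_def mech_def a_def b_def Let_def by simp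
  next
    case False
    define y where "y = (\<lambda>m. - x m)"
    have triy: "\<And>i j k. i \<in> {1..n} \<Longrightarrow> j \<in> {1..n} \<Longrightarrow> k \<in> {1..n} \<Longrightarrow> i \<noteq> j \<Longrightarrow> j \<noteq> k \<Longrightarrow> i \<noteq> k
       \<Longrightarrow> y i \<le> y j \<Longrightarrow> y j \<le> y k \<Longrightarrow> min (y j - y i) (y k - y j) \<le> OPT n x"
    proof -
      fix i j k assume h: "i \<in> {1..n}" "j \<in> {1..n}" "k \<in> {1..n}" "i \<noteq> j" "j \<noteq> k" "i \<noteq> k"
        "y i \<le> y j" "y j \<le> y k"
      have "min (x j - x k) (x i - x j) \<le> OPT n x"
        using tri[OF h(3) h(2) h(1) h(5)[symmetric] h(4)[symmetric] h(6)[symmetric]] h(7,8)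
        unfolding y_def by simp
      then show "min (y j - y i) (y k - y j) \<le> OPT n x" unfolding y_def by (simp add: min.commute)
    qed
    have "min \<bar>y t - y j\<bar> \<bar>y t + max (2 * b) a - y j\<bar> \<le> OPT n x"
      by (rule core[where x=y and a=b and b=a and jL=jR and jR=jL, OF OPT_nonneg triy t]) (use jL jR bnd a0 b0 False j in \<open>auto simp: y_def\<close>)
    moreover have "\<bar>y t - y j\<bar> = \<bar>x t - x j\<bar>" unfolding y_def by (simp add: abs_minus_commute)
    moreover have "\<bar>y t + max (2 * b) a - y j\<bar> = \<bar>x t - max a (2 * b) - x j\<bar>"
      unfolding y_def by (simp add: max.commute abs_minus_commute algebra_simps)
    ultimately show ?thesis using False unfolding agent_cost_def mech_def Let_def
      by (simp add: a_def[symmetric] b_def[symmetric])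
  qed
qed

theorem mainTheorem9:
  fixes n t :: nat and x :: "nat \<Rightarrow> real"
  assumes "n \<ge> 2" and "t \<in> {1..n}"
  shows "SC n x (mech n t x) \<le> (real n - 1) * OPT n x"
proof -
  have "SC n x (mech n t x) = agent_cost (mech n t x) (x t) + (\<Sum>j\<in>{1..n} - {t}. agent_cost (mech n t x) (x j))"
    unfolding SC_def using assms(2) by (simp add: sum.remove)
  also have "agent_cost (mech n t x) (x t) = 0"
    unfolding agent_cost_def mech_def Let_def by simp
  also have "(\<Sum>j\<in>{1..n} - {t}. agent_cost (mech n t x) (x j)) \<le> (\<Sum>j\<in>{1..n} - {t}. OPT n x)"
    by (rule sum_mono) (use each_cost assms(2) in auto)
  also have "\<dots> = (real n - 1) * OPT n x"
    using assms by (simp add: of_nat_diff)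
  finally show ?thesis by simp
qed

end
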